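(* Let $(u_\varepsilon)$ be a family (indexed by $\varepsilon\to0$) in $L^2_\sharp[Y,H^1(\Omega)]$ such that, for some $(u_0,\mathbf{v})\in[L^2(\Omega\times Y)]^{N+1}$ (extended $Y$-periodically in $y$), $$u_\varepsilon\twoheadrightarrow u_0\text{ weakly in }L^2_\sharp[Y,L^2(\Omega)]\quad\text{and}\quad \varepsilon\nabla_x u_\varepsilon\twoheadrightarrow\mathbf{v}\text{ weakly in }L^2_\sharp[Y,L^2(\Omega)]^N.$$ Then $\mathbf{v}=\nabla_y u_0$.
   Context: Let $N\ge1$, $Y=[0,1]^N$, $\Omega\subseteq\mathbb{R}^N$ open. $L^2_\sharp[Y,L^2(\Omega)]$ is the Hilbert space of measurable functions on $\Omega\times\mathbb{R}^N$ that are $\mathbb{Z}^N$-periodic in the second variable and square integrable on $\Omega\times Y$; $L^2_\sharp[Y,H^1(\Omega)]$ is the subspace of those $u$ with distributional partial gradient $\nabla_x u\in L^2_\sharp[Y,L^2(\Omega)]^N$. For $\varepsilon>0$, $\mathcal{F}_\varepsilon(u)(x,y):=u(x,y-x/\varepsilon)$; $u_\varepsilon\twoheadrightarrow u_0$ weakly means $\mathcal{F}_\varepsilon(u_\varepsilon)\rightharpoonup u_0$ weakly in $L^2_\sharp[Y,L^2(\Omega)]$ as $\varepsilon\to0$ (componentwise for vectors). $\nabla_y u_0$ is the distributional gradient in the $y$ variable. *)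

theory Defs
  imports "HOL-Analysis.Analysis"
begin

text \<open>Points of \<Omega> \<times> R^N are pairs (x,y) of the product type 'a \<times> 'a, 'a an N-dimensional
  Euclidean space.  The reference cell is Y = [0,1]^N = cbox 0 One.\<close>

definition unit_cell :: "'a::euclidean_space set" where
  "unit_cell = cbox 0 One"

definition int_lattice :: "'a::euclidean_space set" where
  "int_lattice = {k. \<forall>b\<in>Basis. k \<bullet> b \<in> \<int>}"

definition L2_per :: "'a::euclidean_space set \<Rightarrow> ('a \<times> 'a \<Rightarrow> real) set" where
  "L2_per \<Omega> = {u. u \<in> borel_measurable (lebesgue_on (\<Omega> \<times> UNIV))
      \<and> (\<forall>x\<in>\<Omega>. \<forall>y. \<forall>k\<in>int_lattice. u (x, y + k) = u (x, y))
      \<and> integrable (lebesgue_on (\<Omega> \<times> unit_cell)) (\<lambda>z. (u z)\<^sup>2)}"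

definition L2_per_inner :: "'a::euclidean_space set \<Rightarrow> ('a \<times> 'a \<Rightarrow> real) \<Rightarrow> ('a \<times> 'a \<Rightarrow> real) \<Rightarrow> real" where
  "L2_per_inner \<Omega> u w = integral\<^sup>L (lebesgue_on (\<Omega> \<times> unit_cell)) (\<lambda>z. u z * w z)"

definition L2_per_weak_conv :: "'a::euclidean_space set \<Rightarrow> (nat \<Rightarrow> 'a \<times> 'a \<Rightarrow> real) \<Rightarrow> ('a \<times> 'a \<Rightarrow> real) \<Rightarrow> bool" where
  "L2_per_weak_conv \<Omega> f g \<longleftrightarrow> (\<forall>n. f n \<in> L2_per \<Omega>) \<and> g \<in> L2_per \<Omega>
     \<and> (\<forall>w\<in>L2_per \<Omega>. (\<lambda>n. L2_per_inner \<Omega> (f n) w) \<longlonglongrightarrow> L2_per_inner \<Omega> g w)"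

definition F_eps :: "real \<Rightarrow> ('a::euclidean_space \<times> 'a \<Rightarrow> 'b) \<Rightarrow> 'a \<times> 'a \<Rightarrow> 'b" where
  "F_eps \<epsilon> u = (\<lambda>(x, y). u (x, y - x /\<^sub>R \<epsilon>))"

coinductive smooth_fun :: "('a::euclidean_space \<Rightarrow> real) \<Rightarrow> bool" where
  "f differentiable_on UNIV \<Longrightarrow> continuous_on UNIV f
   \<Longrightarrow> (\<forall>v. smooth_fun (\<lambda>z. frechet_derivative f (at z) v)) \<Longrightarrow> smooth_fun f"

definition tsupp :: "('a::topological_space \<Rightarrow> real) \<Rightarrow> 'a set" where
  "tsupp \<phi> = closure {z. \<phi> z \<noteq> 0}"

definition test_fun :: "'a::euclidean_space set \<Rightarrow> ('a \<times> 'a \<Rightarrow> real) set" where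
  "test_fun \<Omega> = {\<phi>. smooth_fun \<phi> \<and> compact (tsupp \<phi>) \<and> tsupp \<phi> \<subseteq> \<Omega> \<times> UNIV}"

definition dx :: "'a::euclidean_space \<Rightarrow> ('a \<times> 'a \<Rightarrow> real) \<Rightarrow> 'a \<times> 'a \<Rightarrow> real" where
  "dx b \<phi> = (\<lambda>z. frechet_derivative \<phi> (at z) (b, 0))"

definition dy :: "'a::euclidean_space \<Rightarrow> ('a \<times> 'a \<Rightarrow> real) \<Rightarrow> 'a \<times> 'a \<Rightarrow> real" where
  "dy b \<phi> = (\<lambda>z. frechet_derivative \<phi> (at z) (0, b))"

definition is_grad_x :: "'a::euclidean_space set \<Rightarrow> ('a \<times> 'a \<Rightarrow> real) \<Rightarrow> ('a \<times> 'a \<Rightarrow> 'a) \<Rightarrow> bool" where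
  "is_grad_x \<Omega> u g \<longleftrightarrow> (\<forall>\<phi>\<in>test_fun \<Omega>. \<forall>b\<in>Basis.
      integral\<^sup>L (lebesgue_on (\<Omega> \<times> UNIV)) (\<lambda>z. u z * dx b \<phi> z)
      = - integral\<^sup>L (lebesgue_on (\<Omega> \<times> UNIV)) (\<lambda>z. (g z \<bullet> b) * \<phi> z))"

definition is_grad_y :: "'a::euclidean_space set \<Rightarrow> ('a \<times> 'a \<Rightarrow> real) \<Rightarrow> ('a \<times> 'a \<Rightarrow> 'a) \<Rightarrow> bool" where
  "is_grad_y \<Omega> u g \<longleftrightarrow> (\<forall>\<phi>\<in>test_fun \<Omega>. \<forall>b\<in>Basis.
      integral\<^sup>L (lebesgue_on (\<Omega> \<times> UNIV)) (\<lambda>z. u z * dy b \<phi> z)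
      = - integral\<^sup>L (lebesgue_on (\<Omega> \<times> UNIV)) (\<lambda>z. (g z \<bullet> b) * \<phi> z))"

definition H1_per :: "'a::euclidean_space set \<Rightarrow> ('a \<times> 'a \<Rightarrow> real) set" where
  "H1_per \<Omega> = {u. u \<in> L2_per \<Omega> \<and> (\<exists>g. (\<forall>b\<in>Basis. (\<lambda>z. g z \<bullet> b) \<in> L2_per \<Omega>) \<and> is_grad_x \<Omega> u g)}"

end

theory Submission
  imports Defs
begin


lemma lebesgue_preserving:
  fixes T :: "'a::euclidean_space \<Rightarrow> 'a"
  assumes Tb[measurable]: "T \<in> borel \<rightarrow>\<^sub>M borel" and D: "distr lborel borel T = lborel"
  shows "T \<in> lebesgue \<rightarrow>\<^sub>M lebesgue" "distr lebesgue lebesgue T = lebesgue"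
proof -
  have T2: "T \<in> lborel \<rightarrow>\<^sub>M lborel" using Tb by simp
  have dd: "distr lebesgue lborel T = lborel"
  proof -
    have "distr lebesgue lborel T = distr lborel lborel T" by (rule distr_completion[OF T2])
    also have "\<dots> = distr lborel borel T" by (rule distr_cong) simp_all
    finally show ?thesis using D by simp
  qed
  have eq: "null_sets lborel = null_sets (distr lebesgue lborel T)" by (simp only: dd)
  show "T \<in> lebesgue \<rightarrow>\<^sub>M lebesgue"
    by (simp add: completion.measurable_completion2 eq measurable_completion)
  have "lebesgue = completion (distr lborel borel T)" using D by simp
  also have "\<dots> = completion (distr lebesgue lborel T)"
    by (simp add: distr_completion cong: distr_cong)
  also have "\<dots> = distr lebesgue lebesgue T"
    by (subst completion.completion_distr_eq) (auto simp: eq measurable_completion)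
  finally show "distr lebesgue lebesgue T = lebesgue" by simp
qed

lemma shear_preserving:
  fixes c :: real
  shows "distr lborel borel (\<lambda>z::'a::euclidean_space\<times>'a. (fst z, snd z + c *\<^sub>R fst z)) = lborel"
proof (rule measure_eqI)
  show "sets (distr lborel borel (\<lambda>z::'a\<times>'a. (fst z, snd z + c *\<^sub>R fst z))) = sets lborel" by simp
next
  fix A :: "('a\<times>'a) set"
  assume "A \<in> sets (distr lborel borel (\<lambda>z::'a\<times>'a. (fst z, snd z + c *\<^sub>R fst z)))"
  then have A: "A \<in> sets borel" by simp
  let ?S = "\<lambda>z::'a\<times>'a. (fst z, snd z + c *\<^sub>R fst z)"
  have SP: "sets (lborel \<Otimes>\<^sub>M lborel) = (sets borel :: ('a\<times>'a) set set)" by (simp only: lborel_prod sets_lborel)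
  have Sm: "?S \<in> borel \<rightarrow>\<^sub>M borel" by (intro borel_measurable_continuous_onI continuous_intros)
  have SA: "?S -` A \<in> sets borel" using measurable_sets[OF Sm A] by simp
  have "emeasure (distr lborel borel ?S) A = emeasure lborel (?S -` A)"
    using A Sm by (simp add: emeasure_distr)
  also have "\<dots> = emeasure (lborel \<Otimes>\<^sub>M lborel) (?S -` A)" by (simp add: lborel_prod)
  also have "\<dots> = (\<integral>\<^sup>+x. emeasure lborel (Pair x -` (?S -` A)) \<partial>lborel)"
  proof -
    have SA': "?S -` A \<in> sets (lborel \<Otimes>\<^sub>M lborel)" unfolding SP using SA .
    show ?thesis by (rule lborel.emeasure_pair_measure_alt[OF SA'])
  qed
  also have "\<dots> = (\<integral>\<^sup>+x. emeasure lborel (Pair x -` A) \<partial>lborel)"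
  proof (rule nn_integral_cong)
    fix x :: 'a
    have B: "Pair x -` A \<in> sets borel"
      proof -
        have A': "A \<in> sets (lborel \<Otimes>\<^sub>M lborel)" unfolding SP using A .
        show ?thesis using sets_Pair1[OF A'] by simp
      qed
    have "Pair x -` (?S -` A) = (+) (c *\<^sub>R x) -` (Pair x -` A)" by (auto simp: add.commute)
    moreover have "emeasure lborel ((+) (c *\<^sub>R x) -` (Pair x -` A)) = emeasure lborel (Pair x -` A)"
    proof -
      have "emeasure lborel (Pair x -` A) = emeasure (distr lborel borel ((+) (c *\<^sub>R x))) (Pair x -` A)"
        by (simp add: lborel_distr_plus)
      also have "\<dots> = emeasure lborel ((+) (c *\<^sub>R x) -` (Pair x -` A))"
        using B by (simp add: emeasure_distr)
      finally show ?thesis by simp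
    qed
    ultimately show "emeasure lborel (Pair x -` (?S -` A)) = emeasure lborel (Pair x -` A)" by simp
  qed
  also have "\<dots> = emeasure (lborel \<Otimes>\<^sub>M lborel) A"
  proof -
    have A': "A \<in> sets (lborel \<Otimes>\<^sub>M lborel)" unfolding SP using A .
    show ?thesis by (rule lborel.emeasure_pair_measure_alt[OF A', symmetric])
  qed
  also have "\<dots> = emeasure lborel A" by (simp add: lborel_prod)
  finally show "emeasure (distr lborel borel ?S) A = emeasure lborel A" .
qed



lemma smooth_funD:
  assumes "smooth_fun f"
  shows "f differentiable_on UNIV" "continuous_on UNIV f"
    "\<And>v. smooth_fun (\<lambda>z. frechet_derivative f (at z) v)"
  using assms by (auto elim: smooth_fun.cases)

lemma smooth_fun_diff_at: "smooth_fun f \<Longrightarrow> f differentiable (at z)"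
  using smooth_funD(1) by (metis differentiable_on_def UNIV_I at_within_open open_UNIV)

lemma smooth_linear_comp:
  fixes L :: "'b::euclidean_space \<Rightarrow> 'a::euclidean_space"
  assumes L: "linear L" and s: "smooth_fun \<phi>"
  shows "smooth_fun (\<lambda>z. \<phi> (L z))"
proof -
  have bl: "bounded_linear L" using L by (simp add: linear_conv_bounded_linear)
  have dL: "\<And>z. frechet_derivative L (at z) = L"
    using bl by (metis frechet_derivative_at bounded_linear_imp_has_derivative)
  have key: "\<exists>\<psi>. f = (\<lambda>z. \<psi> (L z)) \<and> smooth_fun \<psi> \<Longrightarrow> smooth_fun f" for f :: "'b \<Rightarrow> real"
  proof (rule smooth_fun.coinduct[where X="\<lambda>f. \<exists>\<psi>. f = (\<lambda>z. \<psi> (L z)) \<and> smooth_fun \<psi>"])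
    fix f :: "'b \<Rightarrow> real"
    assume "\<exists>\<psi>. f = (\<lambda>z. \<psi> (L z)) \<and> smooth_fun \<psi>"
    then obtain \<psi> where f: "f = (\<lambda>z. \<psi> (L z))" and s: "smooth_fun \<psi>" by blast
    have dz: "\<And>z. \<psi> differentiable (at (L z))" using s smooth_fun_diff_at by blast
    have Ld: "\<And>z. L differentiable (at z)" using bl bounded_linear_imp_differentiable by blast
    have fd: "\<And>z. f differentiable (at z)"
      unfolding f using differentiable_chain_at[OF Ld dz] by (simp add: o_def)
    have fr: "\<And>z. frechet_derivative f (at z) = (\<lambda>v. frechet_derivative \<psi> (at (L z)) (L v))"
    proof -
      fix z
      have "frechet_derivative (\<psi> \<circ> L) (at z) = frechet_derivative \<psi> (at (L z)) \<circ> frechet_derivative L (at z)"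
        by (rule frechet_derivative_compose[OF Ld dz])
      then show "frechet_derivative f (at z) = (\<lambda>v. frechet_derivative \<psi> (at (L z)) (L v))"
        unfolding f dL by (simp add: o_def)
    qed
    have "f differentiable_on UNIV \<and> continuous_on UNIV f \<and>
      (\<forall>v. (\<exists>\<psi>. (\<lambda>z. frechet_derivative f (at z) v) = (\<lambda>z. \<psi> (L z)) \<and> smooth_fun \<psi>) \<or>
           smooth_fun (\<lambda>z. frechet_derivative f (at z) v))"
    proof (intro conjI allI disjI1)
      show "f differentiable_on UNIV" using fd by (simp add: differentiable_at_imp_differentiable_on)
      show "continuous_on UNIV f" using fd
        by (meson differentiable_at_imp_differentiable_on differentiable_imp_continuous_on)
      fix v
      show "\<exists>\<psi>'. (\<lambda>z. frechet_derivative f (at z) v) = (\<lambda>z. \<psi>' (L z)) \<and> smooth_fun \<psi>'"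
        by (rule exI[of _ "\<lambda>w. frechet_derivative \<psi> (at w) (L v)"]) (simp add: fr smooth_funD(3)[OF s])
    qed
    then show "\<exists>g. f = g \<and> g differentiable_on UNIV \<and> continuous_on UNIV g \<and>
      (\<forall>v. (\<exists>\<psi>. (\<lambda>z. frechet_derivative g (at z) v) = (\<lambda>z. \<psi> (L z)) \<and> smooth_fun \<psi>) \<or>
           smooth_fun (\<lambda>z. frechet_derivative g (at z) v))" by blast
  qed
  show ?thesis by (rule key, intro exI[of _ \<phi>]) (simp add: s)
qed

lemma frechet_zero_outside_tsupp:
  assumes "z \<notin> tsupp \<phi>"
  shows "frechet_derivative \<phi> (at z) v = 0"
proof -
  have o: "open (- tsupp \<phi>)" unfolding tsupp_def by (rule open_Compl) simp
  have z0: "\<phi> w = 0" if w: "w \<in> - tsupp \<phi>" for w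
  proof (rule ccontr)
    assume "\<phi> w \<noteq> 0"
    then have "w \<in> closure {z. \<phi> z \<noteq> 0}" by (intro subsetD[OF closure_subset]) simp
    then show False using w by (simp add: tsupp_def)
  qed
  have zz: "z \<in> - tsupp \<phi>" using assms by simp
  have "(\<phi> has_derivative (\<lambda>_. 0)) (at z)"
    by (rule has_derivative_transform_within_open[OF has_derivative_const o zz]) (simp add: z0)
  then have "frechet_derivative \<phi> (at z) = (\<lambda>_. 0)" by (rule frechet_derivative_at[symmetric])
  then show ?thesis by simp
qed

lemma tsupp_subset: "closed S \<Longrightarrow> (\<And>z. f z \<noteq> 0 \<Longrightarrow> z \<in> S) \<Longrightarrow> tsupp f \<subseteq> S"
  unfolding tsupp_def by (rule closure_minimal) auto

lemma tsupp_deriv: "tsupp (\<lambda>z. frechet_derivative \<phi> (at z) v) \<subseteq> tsupp \<phi>"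
  by (rule tsupp_subset) (auto simp: tsupp_def intro: frechet_zero_outside_tsupp)

lemma compact_tsupp_sub:
  assumes "compact (tsupp g)" "tsupp f \<subseteq> tsupp g" shows "compact (tsupp f)"
proof -
  have "compact (tsupp g \<inter> tsupp f)" by (rule compact_Int_closed[OF assms(1)]) (simp add: tsupp_def)
  moreover have "tsupp g \<inter> tsupp f = tsupp f" using assms(2) by blast
  ultimately show ?thesis by simp
qed

lemma compact_tsupp_deriv: "compact (tsupp \<phi>) \<Longrightarrow> compact (tsupp (\<lambda>z. frechet_derivative \<phi> (at z) v))"
  by (rule compact_tsupp_sub[OF _ tsupp_deriv])



definition floorvec :: "'a::euclidean_space \<Rightarrow> 'a" where
  "floorvec y = (\<Sum>b\<in>Basis. of_int \<lfloor>y \<bullet> b\<rfloor> *\<^sub>R b)"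
lemma floorvec_meas[measurable]: "floorvec \<in> borel_measurable borel"
  unfolding floorvec_def by measurable
lemma bm_fst[measurable (raw)]:
  fixes f :: "'c \<Rightarrow> 'a::euclidean_space \<times> 'b::euclidean_space"
  assumes "f \<in> borel_measurable M" shows "(\<lambda>x. fst (f x)) \<in> borel_measurable M"
  using measurable_compose[OF assms borel_measurable_continuous_onI[OF continuous_on_fst[OF continuous_on_id]]] by simp
lemma bm_snd[measurable (raw)]:
  fixes f :: "'c \<Rightarrow> 'a::euclidean_space \<times> 'b::euclidean_space"
  assumes "f \<in> borel_measurable M" shows "(\<lambda>x. snd (f x)) \<in> borel_measurable M"
  using measurable_compose[OF assms borel_measurable_continuous_onI[OF continuous_on_snd[OF continuous_on_id]]] by simp

lemma floorvec_inner: "b \<in> Basis \<Longrightarrow> floorvec y \<bullet> b = of_int \<lfloor>y \<bullet> b\<rfloor>"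
  by (simp add: floorvec_def inner_sum_left inner_Basis if_distrib[of "\<lambda>x. _ * x"] cong: if_cong)

lemma floorvec_lattice: "floorvec y \<in> int_lattice"
  by (simp add: int_lattice_def floorvec_inner)

lemma lattice_inner: "k \<in> int_lattice \<Longrightarrow> b \<in> Basis \<Longrightarrow> \<exists>m::int. k \<bullet> b = of_int m"
  by (auto simp: int_lattice_def Ints_def)

lemma floorvec_add: assumes k: "k \<in> int_lattice" shows "floorvec (y + k) = floorvec y + k"
proof (rule euclidean_eqI)
  fix b :: 'a assume b: "b \<in> Basis"
  then obtain m where m: "k \<bullet> b = of_int m" using lattice_inner[OF k] by blast
  have fl: "\<lfloor>y \<bullet> b + of_int m\<rfloor> = \<lfloor>y \<bullet> b\<rfloor> + m" by (rule floor_add_int[symmetric])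
  have "floorvec (y + k) \<bullet> b = of_int \<lfloor>y \<bullet> b + k \<bullet> b\<rfloor>" using b by (simp add: floorvec_inner inner_add_left)
  also have "\<dots> = of_int \<lfloor>y \<bullet> b\<rfloor> + k \<bullet> b" unfolding m fl by simp
  also have "\<dots> = (floorvec y + k) \<bullet> b" using b by (simp add: floorvec_inner inner_add_left)
  finally show "floorvec (y + k) \<bullet> b = (floorvec y + k) \<bullet> b" .
qed

lemma floorvec_eq_0_iff: "floorvec y = 0 \<longleftrightarrow> (\<forall>b\<in>Basis. 0 \<le> y \<bullet> b \<and> y \<bullet> b < 1)"
proof -
  have "floorvec y = 0 \<longleftrightarrow> (\<forall>b\<in>Basis. floorvec y \<bullet> b = 0 \<bullet> b)"
    by (rule euclidean_eq_iff)
  also have "\<dots> \<longleftrightarrow> (\<forall>b\<in>Basis. \<lfloor>y \<bullet> b\<rfloor> = 0)" by (simp add: floorvec_inner)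
  also have "\<dots> \<longleftrightarrow> (\<forall>b\<in>Basis. 0 \<le> y \<bullet> b \<and> y \<bullet> b < 1)" by (simp add: floor_eq_iff)
  finally show ?thesis .
qed

lemma borel_lebesgue_on: assumes "f \<in> borel_measurable borel" shows "f \<in> borel_measurable (lebesgue_on A)"
proof -
  have "f \<in> borel_measurable lborel" using assms by (simp only: measurable_lborel2)
  then have "f \<in> borel_measurable lebesgue" by (rule measurable_completion)
  then show ?thesis by (rule measurable_restrict_space1)
qed

lemma borel_sets_lebesgue: "S \<in> sets borel \<Longrightarrow> S \<in> sets lebesgue"
  by simp

lemma integrable_lebesgue_on_sub:
  fixes g :: "_ \<Rightarrow> real"
  assumes "integrable lebesgue g" "A \<in> sets lebesgue" shows "integrable (lebesgue_on A) g"
proof -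
  have A': "A \<inter> space lebesgue \<in> sets lebesgue" using assms(2) by simp
  show ?thesis unfolding integrable_restrict_space[OF A'] by (rule integrable_mult_indicator[OF assms(2,1)])
qed

lemma cv_restrict:
  fixes T :: "'a::euclidean_space \<Rightarrow> 'a" and g :: "'a \<Rightarrow> real"
  assumes Tb: "T \<in> borel \<rightarrow>\<^sub>M borel" and D: "distr lborel borel T = lborel"
   and A: "A \<in> sets lebesgue" and TA: "\<And>z. T z \<in> A \<longleftrightarrow> z \<in> A"
   and g: "g \<in> borel_measurable (lebesgue_on A)"
  shows "integrable (lebesgue_on A) (\<lambda>z. g (T z)) \<longleftrightarrow> integrable (lebesgue_on A) g"
    and "integral\<^sup>L (lebesgue_on A) (\<lambda>z. g (T z)) = integral\<^sup>L (lebesgue_on A) g"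
proof -
  note L = lebesgue_preserving[OF Tb D]
  have A': "A \<inter> space lebesgue \<in> sets lebesgue" using A by simp
  have gm: "(\<lambda>z. indicator A z *\<^sub>R g z) \<in> borel_measurable lebesgue"
    using g by (simp add: borel_measurable_restrict_space_iff[OF A'])
  have ind: "\<And>z. indicator A (T z) = (indicator A z::real)" using TA by (simp add: indicator_def)
  have "integrable (lebesgue_on A) (\<lambda>z. g (T z)) \<longleftrightarrow> integrable lebesgue (\<lambda>z. indicator A z *\<^sub>R g (T z))"
    by (rule integrable_restrict_space[OF A'])
  also have "\<dots> \<longleftrightarrow> integrable lebesgue (\<lambda>z. (\<lambda>w. indicator A w *\<^sub>R g w) (T z))" using ind by simp
  also have "\<dots> \<longleftrightarrow> integrable (distr lebesgue lebesgue T) (\<lambda>w. indicator A w *\<^sub>R g w)"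
    by (rule integrable_distr_eq[symmetric, OF L(1) gm])
  also have "\<dots> \<longleftrightarrow> integrable lebesgue (\<lambda>w. indicator A w *\<^sub>R g w)" using L(2) by simp
  also have "\<dots> \<longleftrightarrow> integrable (lebesgue_on A) g" by (rule integrable_restrict_space[OF A', symmetric])
  finally show "integrable (lebesgue_on A) (\<lambda>z. g (T z)) \<longleftrightarrow> integrable (lebesgue_on A) g" .
  have "integral\<^sup>L (lebesgue_on A) (\<lambda>z. g (T z)) = integral\<^sup>L lebesgue (\<lambda>z. indicator A z *\<^sub>R g (T z))"
    by (rule integral_restrict_space[OF A'])
  also have "\<dots> = integral\<^sup>L lebesgue (\<lambda>z. (\<lambda>w. indicator A w *\<^sub>R g w) (T z))" using ind by simp
  also have "\<dots> = integral\<^sup>L (distr lebesgue lebesgue T) (\<lambda>w. indicator A w *\<^sub>R g w)"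
    by (rule integral_distr[symmetric, OF L(1) gm])
  also have "\<dots> = integral\<^sup>L lebesgue (\<lambda>w. indicator A w *\<^sub>R g w)" using L(2) by simp
  also have "\<dots> = integral\<^sup>L (lebesgue_on A) g" by (rule integral_restrict_space[OF A', symmetric])
  finally show "integral\<^sup>L (lebesgue_on A) (\<lambda>z. g (T z)) = integral\<^sup>L (lebesgue_on A) g" .
qed

lemma translate_preserving:
  fixes c :: "'a::euclidean_space"
  shows "distr lborel borel (\<lambda>z. z + c) = lborel" "(\<lambda>z. z + c) \<in> borel \<rightarrow>\<^sub>M borel"
proof -
  have "(\<lambda>z. z + c) = (+) c" by (rule ext) (simp add: add.commute)
  then show "distr lborel borel (\<lambda>z. z + c) = lborel" using lborel_distr_plus[of c] by simp
  show "(\<lambda>z. z + c) \<in> borel \<rightarrow>\<^sub>M borel" by (intro borel_measurable_continuous_onI continuous_intros)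
qed

lemma shear_meas: "(\<lambda>z::'a::euclidean_space\<times>'a. (fst z, snd z + c *\<^sub>R fst z)) \<in> borel \<rightarrow>\<^sub>M borel"
  by (intro borel_measurable_continuous_onI continuous_intros)

lemma hyperplane_null:
  "{z::'a::euclidean_space\<times>'a. \<exists>b\<in>Basis. snd z \<bullet> b = 1} \<in> null_sets lebesgue"
proof -
  have eq: "{z::'a\<times>'a. \<exists>b\<in>Basis. snd z \<bullet> b = 1} = \<Union>((\<lambda>b. {z. (0, b) \<bullet> z = 1}) ` Basis)"
    by (auto simp: inner_prod_def inner_commute)
  have "negligible (\<Union>((\<lambda>b. {z::'a\<times>'a. (0, b) \<bullet> z = 1}) ` Basis))"
  proof (rule negligible_Union)
    show "finite ((\<lambda>b. {z::'a\<times>'a. (0, b) \<bullet> z = 1}) ` Basis)" by simp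
    fix T assume "T \<in> (\<lambda>b. {z::'a\<times>'a. (0, b) \<bullet> z = 1}) ` Basis"
    then obtain b :: 'a where b: "b \<in> Basis" "T = {z. (0, b) \<bullet> z = 1}" by blast
    have "b \<noteq> 0" using b(1) by (rule nonzero_Basis)
    then have "(0::'a, b) \<noteq> 0" by (simp add: zero_prod_def)
    then show "negligible T" unfolding b(2) by (intro negligible_hyperplane) simp
  qed
  then show ?thesis unfolding eq negligible_iff_null_sets .
qed

lemma mult_le_sq: "\<bar>(a::real) * b\<bar> \<le> a\<^sup>2 + b\<^sup>2"
proof -
  have 1: "2 * (\<bar>a\<bar> * \<bar>b\<bar>) \<le> \<bar>a\<bar>\<^sup>2 + \<bar>b\<bar>\<^sup>2"
    using sum_squares_bound[of "\<bar>a\<bar>" "\<bar>b\<bar>"] by (simp only: mult.assoc)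
  have 2: "0 \<le> \<bar>a\<bar> * \<bar>b\<bar>" by simp
  have 3: "\<bar>a * b\<bar> = \<bar>a\<bar> * \<bar>b\<bar>" by (rule abs_mult)
  have 4: "\<bar>a\<bar>\<^sup>2 + \<bar>b\<bar>\<^sup>2 = a\<^sup>2 + b\<^sup>2" by simp
  have aux: "\<And>x y::real. 0 \<le> x \<Longrightarrow> 2*x \<le> y \<Longrightarrow> x \<le> y" by linarith
  show ?thesis unfolding 3 4[symmetric] by (rule aux[OF 2 1])
qed



lemma mem_unit_cell: "(y::'a::euclidean_space) \<in> unit_cell \<longleftrightarrow> (\<forall>b\<in>Basis. 0 \<le> y \<bullet> b \<and> y \<bullet> b \<le> 1)"
  by (simp add: unit_cell_def mem_box)
lemma times_sets: assumes "A \<in> sets borel" "B \<in> sets borel" shows "A \<times> B \<in> sets (borel :: ('a::euclidean_space\<times>'b::euclidean_space) measure)"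
proof -
  have "A \<times> B \<in> sets (borel \<Otimes>\<^sub>M borel)" by (rule pair_measureI) (use assms in auto)
  then show ?thesis by (simp only: borel_prod)
qed
lemma integrable_indicator_compact: assumes "compact (C::'a::euclidean_space set)" shows "integrable lebesgue (indicator C :: _ \<Rightarrow> real)"
proof -
  have f: "C \<in> sets lebesgue \<and> emeasure lebesgue C < \<infinity>" using lmeasurable_compact[OF assms] by (simp only: fmeasurable_def mem_Collect_eq)
  have s: "C \<inter> space lebesgue = C" by simp
  show ?thesis unfolding integrable_indicator_iff s using f .
qed

lemma tsupp_zero: assumes "z \<notin> tsupp h" shows "h z = 0"
proof (rule ccontr)
  assume "h z \<noteq> 0"
  then have "z \<in> closure {z. h z \<noteq> 0}" by (intro subsetD[OF closure_subset]) simp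
  then show False using assms by (simp add: tsupp_def)
qed

lemma integrable_bounded_compact:
  fixes g :: "'a::euclidean_space \<Rightarrow> real"
  assumes gm: "g \<in> borel_measurable lebesgue" and C: "compact C"
    and gz: "\<And>z. z \<notin> C \<Longrightarrow> g z = 0" and gb: "\<And>z. \<bar>g z\<bar> \<le> B"
  shows "integrable lebesgue g"
proof -
  have i: "integrable lebesgue (\<lambda>z. B * indicator C z)"
    by (rule integrable_mult_right[OF integrable_indicator_compact[OF C]])
  show ?thesis
  proof (rule Bochner_Integration.integrable_bound[OF i gm], rule AE_I2)
    fix z
    have B0: "0 \<le> B" using gb[of z] by linarith
    show "norm (g z) \<le> norm (B * indicator C z)"
    proof (cases "z \<in> C")
      case True then show ?thesis using gb[of z] B0 by simp
    next
      case False then show ?thesis using gz[OF False] by simp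
    qed
  qed
qed

lemma floorvec_Y0_cell: "floorvec y = 0 \<Longrightarrow> y \<in> unit_cell"
  by (simp add: floorvec_eq_0_iff mem_unit_cell less_imp_le)

lemma floorvec_pred: "{z::'a::euclidean_space\<times>'a. floorvec (snd z) = k} \<in> sets borel"
proof -
  have "Measurable.pred borel (\<lambda>z::'a\<times>'a. floorvec (snd z) = k)"
    by (rule pred_eq_const1[where N=borel]) (auto intro: borel_closed)
  then show ?thesis unfolding pred_def by simp
qed

lemma emb_inner: "b \<in> Basis \<Longrightarrow> (\<Sum>c\<in>Basis. of_int (m c) *\<^sub>R c) \<bullet> b = (of_int (m b) :: real)"
  by (simp add: inner_sum_left inner_Basis if_distrib[of "\<lambda>x. _ * x"] cong: if_cong)

lemma floor_bound_int:
  fixes t R :: real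
  assumes "\<bar>t\<bar> \<le> R"
  shows "\<lfloor>t\<rfloor> \<in> {-(\<lceil>R\<rceil> + 1)..\<lceil>R\<rceil> + 1}"
proof -
  have a: "real_of_int \<lfloor>t\<rfloor> \<le> t" by (rule of_int_floor_le)
  have b: "t < real_of_int \<lfloor>t\<rfloor> + 1" by (rule real_of_int_floor_add_one_gt)
  have c: "R \<le> real_of_int \<lceil>R\<rceil>" by (rule le_of_int_ceiling)
  have "real_of_int (-(\<lceil>R\<rceil> + 1)) \<le> real_of_int \<lfloor>t\<rfloor>" using a b c assms by simp linarith
  moreover have "real_of_int \<lfloor>t\<rfloor> \<le> real_of_int (\<lceil>R\<rceil> + 1)" using a b c assms by simp linarith
  ultimately show ?thesis by (simp only: of_int_le_iff atLeastAtMost_iff)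
qed

lemma UNF:
  fixes h :: "'a::euclidean_space \<times> 'a \<Rightarrow> real" and \<Omega> :: "'a set"
  assumes \<Omega>: "open \<Omega>" and hc: "continuous_on UNIV h" and hs: "compact (tsupp h)"
  shows "\<exists>w\<in>L2_per \<Omega>. \<forall>f\<in>L2_per \<Omega>. integrable (lebesgue_on (\<Omega> \<times> UNIV)) (\<lambda>z. f z * h z) \<and>
      integral\<^sup>L (lebesgue_on (\<Omega> \<times> UNIV)) (\<lambda>z. f z * h z) = L2_per_inner \<Omega> f w"
proof -
  have hm: "h \<in> borel_measurable borel" using hc by (rule borel_measurable_continuous_onI)
  have hz: "\<And>z. z \<notin> tsupp h \<Longrightarrow> h z = 0" by (rule tsupp_zero)
  obtain R where R: "\<And>z. z \<in> tsupp h \<Longrightarrow> norm z \<le> R"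
    using compact_imp_bounded[OF hs] unfolding bounded_iff by blast
  have "compact (h ` tsupp h)" by (rule compact_continuous_image[OF continuous_on_subset[OF hc]]) (use hs in auto)
  then have "bounded (h ` tsupp h)" by (rule compact_imp_bounded)
  then obtain B0 where B0: "\<And>y. y \<in> h ` tsupp h \<Longrightarrow> norm y \<le> B0"
    unfolding bounded_iff by blast
  define B where "B = max B0 0"
  have B: "\<bar>h z\<bar> \<le> B" for z
  proof (cases "z \<in> tsupp h")
    case True then show ?thesis using B0[of "h z"] by (auto simp: B_def)
  next
    case False then show ?thesis using hz[OF False] by (simp add: B_def)
  qed
  have Bnn: "0 \<le> B" by (simp add: B_def)
  define M :: int where "M = \<lceil>R\<rceil> + 1"
  define emb :: "('a \<Rightarrow> int) \<Rightarrow> 'a" where "emb m = (\<Sum>b\<in>Basis. of_int (m b) *\<^sub>R b)" for m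
  define K where "K = emb ` (PiE Basis (\<lambda>_. {-M..M}))"
  have Kfin: "finite K" unfolding K_def by (intro finite_imageI finite_PiE) auto
  have Klat: "k \<in> int_lattice" if "k \<in> K" for k
  proof -
    obtain m where k: "k = emb m" using \<open>k \<in> K\<close> unfolding K_def by blast
    show ?thesis unfolding int_lattice_def k emb_def by (simp add: emb_inner)
  qed
  have floorK: "floorvec (snd z) \<in> K" if hz0: "h z \<noteq> 0" for z
  proof -
    have zs: "z \<in> tsupp h" using hz hz0 by blast
    have e: "floorvec (snd z) = emb (restrict (\<lambda>b. \<lfloor>snd z \<bullet> b\<rfloor>) Basis)"
      unfolding floorvec_def emb_def by (rule sum.cong) auto
    have m: "restrict (\<lambda>b. \<lfloor>snd z \<bullet> b\<rfloor>) Basis \<in> PiE Basis (\<lambda>_. {-M..M})"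
      unfolding restrict_PiE_iff
    proof
      fix b :: 'a assume b: "b \<in> Basis"
      have "\<bar>snd z \<bullet> b\<bar> \<le> norm (snd z)" by (rule Basis_le_norm[OF b])
      also have "\<dots> \<le> norm z" using norm_snd_le[of "snd z" "fst z"] by simp
      also have "\<dots> \<le> R" by (rule R[OF zs])
      finally show "\<lfloor>snd z \<bullet> b\<rfloor> \<in> {-M..M}" unfolding M_def by (rule floor_bound_int)
    qed
    show ?thesis unfolding K_def e by (rule imageI[OF m])
  qed
  define w where "w = (\<lambda>z. \<Sum>k\<in>K. h (fst z, snd z - floorvec (snd z) + k))"
  have wm: "w \<in> borel_measurable borel"
    unfolding w_def by (intro borel_measurable_sum, rule measurable_compose[OF _ hm]) measurable
  have w_per: "w (x, y + k) = w (x, y)" if "k \<in> int_lattice" for x y k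
    unfolding w_def using floorvec_add[OF that, of y] by (simp add: algebra_simps)
  have w_Y0: "w z = (\<Sum>k\<in>K. h (fst z, snd z + k))" if "floorvec (snd z) = 0" for z
    unfolding w_def using that by simp
  have w_supp: "fst z \<in> fst ` tsupp h" if "w z \<noteq> 0" for z
  proof -
    have "\<exists>k\<in>K. h (fst z, snd z - floorvec (snd z) + k) \<noteq> 0"
    proof (rule ccontr)
      assume "\<not> (\<exists>k\<in>K. h (fst z, snd z - floorvec (snd z) + k) \<noteq> 0)"
      then have "w z = 0" unfolding w_def by (intro sum.neutral) simp
      then show False using that by simp
    qed
    then obtain k where "h (fst z, snd z - floorvec (snd z) + k) \<noteq> 0" by blast
    then have "(fst z, snd z - floorvec (snd z) + k) \<in> tsupp h" using hz by blast
    then show ?thesis by (rule image_eqI[rotated]) simp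
  qed
  have w_bound: "\<bar>w z\<bar> \<le> real (card K) * B" for z
  proof -
    have "\<bar>w z\<bar> \<le> (\<Sum>k\<in>K. \<bar>h (fst z, snd z - floorvec (snd z) + k)\<bar>)" unfolding w_def by (rule sum_abs)
    also have "\<dots> \<le> of_nat (card K) * B" by (rule sum_bounded_above) (rule B)
    finally show ?thesis by simp
  qed
  have Osets: "\<Omega> \<times> (UNIV::'a set) \<in> sets lebesgue"
    by (rule borel_sets_lebesgue[OF times_sets]) (auto intro: borel_open \<Omega>)
  have O': "(\<Omega> \<times> (UNIV::'a set)) \<inter> space lebesgue \<in> sets lebesgue" using Osets by simp
  have Ysets: "\<Omega> \<times> unit_cell \<in> sets lebesgue"
    by (rule borel_sets_lebesgue[OF times_sets]) (auto intro: borel_open borel_closed \<Omega> simp: unit_cell_def)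
  have Y': "(\<Omega> \<times> unit_cell) \<inter> space lebesgue \<in> sets lebesgue" using Ysets by simp
  have UYsets: "(UNIV::'a set) \<times> unit_cell \<in> sets lebesgue"
    by (rule borel_sets_lebesgue[OF times_sets]) (auto intro: borel_closed simp: unit_cell_def)
  have Y0sets: "{z::'a\<times>'a. floorvec (snd z) = 0} \<in> sets lebesgue"
    by (rule borel_sets_lebesgue[OF floorvec_pred])
  have wL2: "w \<in> L2_per \<Omega>"
    unfolding L2_per_def
  proof (intro CollectI conjI ballI allI)
    show "w \<in> borel_measurable (lebesgue_on (\<Omega> \<times> UNIV))" by (rule borel_lebesgue_on[OF wm])
    show "w (x, y + k) = w (x, y)" if "k \<in> int_lattice" for x y k by (rule w_per[OF that])
    define C where "C = fst ` tsupp h \<times> (unit_cell::'a set)"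
    have Cc: "compact C" unfolding C_def unit_cell_def
      by (intro compact_Times compact_continuous_image continuous_on_fst continuous_on_id hs compact_cbox)
    have gi: "integrable lebesgue (\<lambda>z. indicator (UNIV \<times> unit_cell) z * (w z)\<^sup>2)"
    proof (rule integrable_bounded_compact[OF _ Cc])
      show "(\<lambda>z. indicator (UNIV \<times> unit_cell) z * (w z)\<^sup>2) \<in> borel_measurable lebesgue"
        using UYsets wm by (intro borel_measurable_times borel_measurable_indicator) (auto intro: measurable_completion simp: borel_lebesgue_on)
      show "(\<lambda>z. indicator (UNIV \<times> unit_cell) z * (w z)\<^sup>2) z = 0" if "z \<notin> C" for z
        using that w_supp[of z] by (cases z) (auto simp: C_def indicator_def)
      show "\<bar>indicator (UNIV \<times> unit_cell) z * (w z)\<^sup>2\<bar> \<le> (real (card K) * B)\<^sup>2" for z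
      proof -
        have "\<bar>w z\<bar>\<^sup>2 \<le> (real (card K) * B)\<^sup>2" by (rule power_mono[OF w_bound abs_ge_zero])
        then show ?thesis by (simp add: indicator_def)
      qed
    qed
    have "integrable (lebesgue_on (\<Omega> \<times> unit_cell)) (\<lambda>z. indicator (UNIV \<times> unit_cell) z * (w z)\<^sup>2)"
      by (rule integrable_lebesgue_on_sub[OF gi Ysets])
    then show "integrable (lebesgue_on (\<Omega> \<times> unit_cell)) (\<lambda>z. (w z)\<^sup>2)"
      by (rule Bochner_Integration.integrable_cong[THEN iffD1, rotated 2]) (auto simp: indicator_def)
  qed
  show ?thesis
  proof (rule bexI[OF _ wL2], intro ballI)
    fix f assume fL: "f \<in> L2_per \<Omega>"
    have fm: "f \<in> borel_measurable (lebesgue_on (\<Omega> \<times> UNIV))"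
      and fper: "\<And>x y k. x \<in> \<Omega> \<Longrightarrow> k \<in> int_lattice \<Longrightarrow> f (x, y + k) = f (x, y)"
      and f2: "integrable (lebesgue_on (\<Omega> \<times> unit_cell)) (\<lambda>z. (f z)\<^sup>2)"
      using fL unfolding L2_per_def by auto
    let ?O = "\<Omega> \<times> (UNIV::'a set)"
    let ?L = "lebesgue_on ?O"
    define Y0 where "Y0 = {z::'a\<times>'a. floorvec (snd z) = 0}"
    define trm where "trm k z = indicator {z::'a\<times>'a. floorvec (snd z) = k} z * (f z * h z)" for k z
    define s where "s k z = indicator Y0 z * (f z * h (fst z, snd z + k))" for k z
    have hL: "h \<in> borel_measurable ?L" by (rule borel_lebesgue_on[OF hm])
    have hkL: "(\<lambda>z. h (fst z, snd z + k)) \<in> borel_measurable ?L" for k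
      by (rule borel_lebesgue_on, rule measurable_compose[OF _ hm]) measurable
    have indL: "(\<lambda>z. indicator {z::'a\<times>'a. floorvec (snd z) = k} z :: real) \<in> borel_measurable ?L" for k
      by (rule borel_lebesgue_on, rule borel_measurable_indicator, rule floorvec_pred)
    have Y0L: "(\<lambda>z. indicator Y0 z :: real) \<in> borel_measurable ?L"
      unfolding Y0_def by (rule indL)
    have trm_m: "trm k \<in> borel_measurable ?L" for k
      unfolding trm_def by (intro borel_measurable_times indL fm hL)
    have s_m: "s k \<in> borel_measurable ?L" for k
      unfolding s_def by (intro borel_measurable_times Y0L fm hkL)
    have pw: "f z * h z = (\<Sum>k\<in>K. trm k z)" for z
    proof (cases "h z = 0")
      case True then show ?thesis by (simp add: trm_def)
    next
      case False
      then have "floorvec (snd z) \<in> K" by (rule floorK)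
      then show ?thesis using Kfin by (simp add: trm_def indicator_def)
    qed
    have tr: "trm k (z + (0, k)) = s k z" if "k \<in> K" "z \<in> ?O" for k z
    proof -
      obtain x y where z: "z = (x, y)" by (cases z)
      have x: "x \<in> \<Omega>" using that z by simp
      have kl: "k \<in> int_lattice" by (rule Klat[OF that(1)])
      have "floorvec (y + k) = k \<longleftrightarrow> floorvec y = 0" using floorvec_add[OF kl, of y] by simp
      then show ?thesis using fper[OF x kl] by (simp add: z trm_def s_def Y0_def indicator_def)
    qed
    have TO: "z + (0, k) \<in> ?O \<longleftrightarrow> z \<in> ?O" for z and k :: 'a by (cases z) simp
    note trp = translate_preserving[of "(0::'a, k)" for k]
    have h2L: "integrable ?L (\<lambda>z. (h z)\<^sup>2)"
    proof -
      have "integrable lebesgue (\<lambda>z. (h z)\<^sup>2)"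
      proof (rule integrable_bounded_compact[OF _ hs])
        show "(\<lambda>z. (h z)\<^sup>2) \<in> borel_measurable lebesgue"
          using hm by (intro borel_measurable_power) (simp add: measurable_completion)
        show "(h z)\<^sup>2 = 0" if "z \<notin> tsupp h" for z using hz[OF that] by simp
        show "\<bar>(h z)\<^sup>2\<bar> \<le> B\<^sup>2" for z using power_mono[OF B abs_ge_zero, of z 2] by simp
      qed
      then show ?thesis by (rule integrable_lebesgue_on_sub[OF _ Osets])
    qed
    have hk2L: "integrable ?L (\<lambda>z. (h (fst z, snd z + k))\<^sup>2)" for k
    proof -
      have m: "(\<lambda>z. (h z)\<^sup>2) \<in> borel_measurable ?L" using hL by (rule borel_measurable_power)
      have "integrable ?L (\<lambda>z. (h (z + (0,k)))\<^sup>2)"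
        using cv_restrict(1)[OF trp(2) trp(1) Osets TO m] h2L by simp
      moreover have "z + (0,k) = (fst z, snd z + k)" for z :: "'a\<times>'a" by (cases z) simp
      ultimately show ?thesis by simp
    qed
    have f2Y0: "integrable ?L (\<lambda>z. indicator Y0 z * (f z)\<^sup>2)"
    proof -
      have "integrable lebesgue (\<lambda>z. indicator (\<Omega> \<times> unit_cell) z *\<^sub>R (f z)\<^sup>2)"
        using f2 by (simp only: integrable_restrict_space[OF Y'])
      then have "integrable lebesgue (\<lambda>z. indicator Y0 z *\<^sub>R (indicator (\<Omega> \<times> unit_cell) z *\<^sub>R (f z)\<^sup>2))"
        by (rule integrable_mult_indicator[OF Y0sets[folded Y0_def]])
      then have I1: "integrable ?L (\<lambda>z. indicator Y0 z *\<^sub>R (indicator (\<Omega> \<times> unit_cell) z *\<^sub>R (f z)\<^sup>2))"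
        by (rule integrable_lebesgue_on_sub[OF _ Osets])
      have eqY: "indicator Y0 z *\<^sub>R (indicator (\<Omega> \<times> unit_cell) z *\<^sub>R (f z)\<^sup>2) = indicator Y0 z * (f z)\<^sup>2"
        if "z \<in> space ?L" for z
        using that floorvec_Y0_cell[of "snd z"] by (cases z) (auto simp: Y0_def indicator_def)
      have "integrable ?L (\<lambda>z. indicator Y0 z *\<^sub>R (indicator (\<Omega> \<times> unit_cell) z *\<^sub>R (f z)\<^sup>2))
          \<longleftrightarrow> integrable ?L (\<lambda>z. indicator Y0 z * (f z)\<^sup>2)"
        by (rule Bochner_Integration.integrable_cong[OF refl eqY])
      then show ?thesis using I1 by simp
    qed
    have s_int: "integrable ?L (s k)" for k
    proof -
      have I: "integrable ?L (\<lambda>z. indicator Y0 z * (f z)\<^sup>2 + (h (fst z, snd z + k))\<^sup>2)"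
        by (intro Bochner_Integration.integrable_add f2Y0 hk2L)
      have "AE z in ?L. norm (s k z) \<le> norm (indicator Y0 z * (f z)\<^sup>2 + (h (fst z, snd z + k))\<^sup>2)"
      proof (rule AE_I2)
        fix z
        have "\<bar>s k z\<bar> \<le> indicator Y0 z * (f z)\<^sup>2 + (h (fst z, snd z + k))\<^sup>2"
          using mult_le_sq[of "f z" "h (fst z, snd z + k)"] by (simp add: s_def indicator_def)
        then show "norm (s k z) \<le> norm (indicator Y0 z * (f z)\<^sup>2 + (h (fst z, snd z + k))\<^sup>2)"
          by (simp add: indicator_def)
      qed
      then show ?thesis by (rule Bochner_Integration.integrable_bound[OF I s_m])
    qed
    have trm_int: "integrable ?L (trm k)" and trm_eq: "integral\<^sup>L ?L (trm k) = integral\<^sup>L ?L (s k)"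
      if k: "k \<in> K" for k
    proof -
      have c: "integrable ?L (\<lambda>z. trm k (z + (0,k))) \<longleftrightarrow> integrable ?L (trm k)"
        by (rule cv_restrict(1)[OF trp(2) trp(1) Osets TO trm_m])
      have c2: "integral\<^sup>L ?L (\<lambda>z. trm k (z + (0,k))) = integral\<^sup>L ?L (trm k)"
        by (rule cv_restrict(2)[OF trp(2) trp(1) Osets TO trm_m])
      have eqs: "\<And>z. z \<in> space ?L \<Longrightarrow> trm k (z + (0,k)) = s k z" using tr[OF k] by simp
      have "integrable ?L (\<lambda>z. trm k (z + (0,k))) \<longleftrightarrow> integrable ?L (s k)"
        by (rule Bochner_Integration.integrable_cong[OF refl eqs])
      then have "integrable ?L (\<lambda>z. trm k (z + (0,k)))" using s_int[of k] by simp
      then show "integrable ?L (trm k)" using c by simp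
      have "integral\<^sup>L ?L (\<lambda>z. trm k (z + (0,k))) = integral\<^sup>L ?L (s k)"
        by (rule Bochner_Integration.integral_cong[OF refl eqs])
      then show "integral\<^sup>L ?L (trm k) = integral\<^sup>L ?L (s k)" using c2 by simp
    qed
    have fh_eq: "(\<lambda>z. f z * h z) = (\<lambda>z. \<Sum>k\<in>K. trm k z)" using pw by (rule ext)
    have int_fh: "integrable ?L (\<lambda>z. f z * h z)"
      unfolding fh_eq by (intro Bochner_Integration.integrable_sum trm_int)
    have "integral\<^sup>L ?L (\<lambda>z. f z * h z) = (\<Sum>k\<in>K. integral\<^sup>L ?L (trm k))"
      unfolding fh_eq by (rule Bochner_Integration.integral_sum) (rule trm_int)
    also have "\<dots> = (\<Sum>k\<in>K. integral\<^sup>L ?L (s k))" by (rule sum.cong[OF refl]) (rule trm_eq)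
    also have "\<dots> = integral\<^sup>L ?L (\<lambda>z. \<Sum>k\<in>K. s k z)"
      by (rule Bochner_Integration.integral_sum[symmetric]) (rule s_int)
    also have "\<dots> = integral\<^sup>L ?L (\<lambda>z. indicator Y0 z * (f z * w z))"
    proof (rule Bochner_Integration.integral_cong[OF refl])
      fix z
      show "(\<Sum>k\<in>K. s k z) = indicator Y0 z * (f z * w z)"
      proof (cases "z \<in> Y0")
        case True
        then have "w z = (\<Sum>k\<in>K. h (fst z, snd z + k))" by (intro w_Y0) (simp add: Y0_def)
        then show ?thesis using True by (simp add: s_def sum_distrib_left)
      next
        case False then show ?thesis by (simp add: s_def)
      qed
    qed
    also have "\<dots> = integral\<^sup>L lebesgue (\<lambda>z. indicator ?O z *\<^sub>R (indicator Y0 z * (f z * w z)))"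
      by (rule integral_restrict_space[OF O'])
    also have "\<dots> = integral\<^sup>L lebesgue (\<lambda>z. indicator (\<Omega> \<times> unit_cell) z *\<^sub>R (f z * w z))"
    proof (rule integral_cong_AE)
      have gL: "(\<lambda>z. indicator Y0 z * (f z * w z)) \<in> borel_measurable ?L"
        by (intro borel_measurable_times Y0L fm borel_lebesgue_on[OF wm])
      show "(\<lambda>z. indicator ?O z *\<^sub>R (indicator Y0 z * (f z * w z))) \<in> borel_measurable lebesgue"
        using gL by (simp only: borel_measurable_restrict_space_iff[OF O'])
      have fwL: "(\<lambda>z. f z * w z) \<in> borel_measurable ?L"
        by (intro borel_measurable_times fm borel_lebesgue_on[OF wm])
      then have fw': "(\<lambda>z. indicator ?O z *\<^sub>R (f z * w z)) \<in> borel_measurable lebesgue"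
        by (simp only: borel_measurable_restrict_space_iff[OF O'])
      have UYm: "(\<lambda>z. indicator ((UNIV::'a set) \<times> unit_cell) z :: real) \<in> borel_measurable lebesgue"
        by (rule borel_measurable_indicator[OF UYsets])
      have "(\<lambda>z. indicator ((UNIV::'a set) \<times> unit_cell) z * (indicator ?O z *\<^sub>R (f z * w z))) \<in> borel_measurable lebesgue"
        by (rule borel_measurable_times[OF UYm fw'])
      moreover have "(\<lambda>z. indicator ((UNIV::'a set) \<times> unit_cell) z * (indicator ?O z *\<^sub>R (f z * w z)))
          = (\<lambda>z. indicator (\<Omega> \<times> unit_cell) z *\<^sub>R (f z * w z))"
        by (rule ext, case_tac z) (auto simp: indicator_def)
      ultimately show "(\<lambda>z. indicator (\<Omega> \<times> unit_cell) z *\<^sub>R (f z * w z)) \<in> borel_measurable lebesgue" by simp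
      have ae: "AE z in lebesgue. z \<notin> {z::'a\<times>'a. \<exists>b\<in>Basis. snd z \<bullet> b = 1}"
        by (rule AE_I'[OF hyperplane_null]) auto
      show "AE z in lebesgue. indicator ?O z *\<^sub>R (indicator Y0 z * (f z * w z)) =
          indicator (\<Omega> \<times> unit_cell) z *\<^sub>R (f z * w z)"
      proof (rule AE_mp[OF ae], rule AE_I2, rule impI)
        fix z :: "'a\<times>'a"
        assume nz: "z \<notin> {z::'a\<times>'a. \<exists>b\<in>Basis. snd z \<bullet> b = 1}"
        obtain x y where z: "z = (x, y)" by (cases z)
        have iff: "floorvec y = 0 \<longleftrightarrow> y \<in> unit_cell"
        proof
          assume "floorvec y = 0" then show "y \<in> unit_cell" by (rule floorvec_Y0_cell)
        next
          assume yc: "y \<in> unit_cell"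
          show "floorvec y = 0" unfolding floorvec_eq_0_iff
          proof
            fix b :: 'a assume b: "b \<in> Basis"
            have "0 \<le> y \<bullet> b" "y \<bullet> b \<le> 1" using yc b by (auto simp: mem_unit_cell)
            moreover have "y \<bullet> b \<noteq> 1" using nz b z by auto
            ultimately show "0 \<le> y \<bullet> b \<and> y \<bullet> b < 1" by simp
          qed
        qed
        show "indicator ?O z *\<^sub>R (indicator Y0 z * (f z * w z)) =
          indicator (\<Omega> \<times> unit_cell) z *\<^sub>R (f z * w z)"
          using iff by (simp add: z Y0_def indicator_def)
      qed
    qed
    also have "\<dots> = integral\<^sup>L (lebesgue_on (\<Omega> \<times> unit_cell)) (\<lambda>z. f z * w z)"
      by (rule integral_restrict_space[OF Y', symmetric])
    also have "\<dots> = L2_per_inner \<Omega> f w" by (simp add: L2_per_inner_def)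
    finally show "integrable (lebesgue_on (\<Omega> \<times> UNIV)) (\<lambda>z. f z * h z) \<and>
      integral\<^sup>L (lebesgue_on (\<Omega> \<times> UNIV)) (\<lambda>z. f z * h z) = L2_per_inner \<Omega> f w"
      using int_fh by simp
  qed
qed



definition shear :: "real \<Rightarrow> 'a::euclidean_space \<times> 'a \<Rightarrow> 'a \<times> 'a" where
  "shear c z = (fst z, snd z + c *\<^sub>R fst z)"

lemma shear_linear: "linear (shear c)"
  by (rule linearI) (simp_all add: shear_def prod_eq_iff algebra_simps scaleR_add_right)

lemma shear_inv: "shear (-c) (shear c z) = z" "shear c (shear (-c) z) = z"
  by (simp_all add: shear_def)

lemma shear_cont: "continuous_on UNIV (shear c)"
  unfolding shear_def by (intro continuous_intros)

lemma frechet_comp_linear: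
  fixes L :: "'b::euclidean_space \<Rightarrow> 'a::euclidean_space" and \<phi> :: "'a \<Rightarrow> real"
  assumes L: "linear L" and d: "\<phi> differentiable (at (L z))"
  shows "frechet_derivative (\<lambda>z. \<phi> (L z)) (at z) v = frechet_derivative \<phi> (at (L z)) (L v)"
proof -
  have bl: "bounded_linear L" using L by (simp add: linear_conv_bounded_linear)
  have dL: "frechet_derivative L (at z) = L"
    using bl by (metis frechet_derivative_at bounded_linear_imp_has_derivative)
  have Ld: "L differentiable (at z)" using bl bounded_linear_imp_differentiable by blast
  have "frechet_derivative (\<phi> \<circ> L) (at z) = frechet_derivative \<phi> (at (L z)) \<circ> frechet_derivative L (at z)"
    by (rule frechet_derivative_compose[OF Ld d])
  then show ?thesis unfolding dL by (simp add: o_def)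
qed

lemma compact_closed_sub: "compact S \<Longrightarrow> closed T \<Longrightarrow> T \<subseteq> S \<Longrightarrow> compact T"
  by (metis compact_Int_closed inf.absorb2)

lemma test_fun_shear:
  assumes \<phi>: "\<phi> \<in> test_fun \<Omega>"
  shows "(\<lambda>z. \<phi> (shear c z)) \<in> test_fun \<Omega>"
proof -
  have s: "smooth_fun \<phi>" and cs: "compact (tsupp \<phi>)" and sub: "tsupp \<phi> \<subseteq> \<Omega> \<times> UNIV"
    using \<phi> by (auto simp: test_fun_def)
  let ?S = "shear (-c) ` tsupp \<phi>"
  have cS: "compact ?S" by (rule compact_continuous_image[OF continuous_on_subset[OF shear_cont] cs]) simp
  have tS: "tsupp (\<lambda>z. \<phi> (shear c z)) \<subseteq> ?S"
  proof (rule tsupp_subset[OF compact_imp_closed[OF cS]])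
    fix z assume "\<phi> (shear c z) \<noteq> 0"
    then have "shear c z \<in> tsupp \<phi>" using tsupp_zero by blast
    then show "z \<in> ?S" by (rule image_eqI[rotated]) (simp add: shear_inv)
  qed
  have "?S \<subseteq> \<Omega> \<times> UNIV" using sub by (auto simp: shear_def)
  moreover have "compact (tsupp (\<lambda>z. \<phi> (shear c z)))"
    by (rule compact_closed_sub[OF cS _ tS]) (simp add: tsupp_def)
  moreover have "smooth_fun (\<lambda>z. \<phi> (shear c z))" by (rule smooth_linear_comp[OF shear_linear s])
  ultimately show ?thesis using tS unfolding test_fun_def by blast
qed

lemma dx_shear:
  assumes s: "smooth_fun \<phi>" and b: "b \<in> Basis"
  shows "dx b (\<lambda>z. \<phi> (shear c z)) z = dx b \<phi> (shear c z) + c * dy b \<phi> (shear c z)"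
proof -
  have d: "\<phi> differentiable (at (shear c z))" by (rule smooth_fun_diff_at[OF s])
  then have bl: "bounded_linear (frechet_derivative \<phi> (at (shear c z)))"
    using frechet_derivative_works has_derivative_bounded_linear by blast
  then have lin: "linear (frechet_derivative \<phi> (at (shear c z)))" by (rule bounded_linear.linear)
  have e: "shear c (b, 0) = (b, 0) + c *\<^sub>R (0, b)" by (simp add: shear_def)
  let ?D = "frechet_derivative \<phi> (at (shear c z))"
  have "?D (shear c (b, 0)) = ?D ((b, 0) + c *\<^sub>R (0, b))" by (simp only: e)
  also have "\<dots> = ?D (b, 0) + ?D (c *\<^sub>R (0, b))" by (rule linear_add[OF lin])
  also have "\<dots> = ?D (b, 0) + c * ?D (0, b)" using linear_scale[OF lin, of c "(0, b)"] by simp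
  finally show ?thesis
    unfolding dx_def dy_def frechet_comp_linear[OF shear_linear d] .
qed



lemma smooth_deriv_cont:
  assumes "smooth_fun \<phi>" shows "continuous_on UNIV (\<lambda>z. frechet_derivative \<phi> (at z) v)"
  using smooth_funD(2)[OF smooth_funD(3)[OF assms]] .

lemma key_n:
  fixes \<Omega> :: "'a::euclidean_space set" and u :: "'a\<times>'a \<Rightarrow> real" and g :: "'a\<times>'a \<Rightarrow> 'a"
  assumes \<Omega>: "open \<Omega>" and \<phi>: "\<phi> \<in> test_fun \<Omega>" and b: "b \<in> Basis" and \<epsilon>: "\<epsilon> > 0"
    and Fu: "F_eps \<epsilon> u \<in> L2_per \<Omega>" and Fg: "F_eps \<epsilon> (\<lambda>z. \<epsilon> * (g z \<bullet> b)) \<in> L2_per \<Omega>"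
    and grad: "is_grad_x \<Omega> u g"
    and i1: "integrable (lebesgue_on (\<Omega> \<times> UNIV)) (\<lambda>z. F_eps \<epsilon> u z * dx b \<phi> z)"
    and i2: "integrable (lebesgue_on (\<Omega> \<times> UNIV)) (\<lambda>z. F_eps \<epsilon> u z * dy b \<phi> z)"
  shows "\<epsilon> * integral\<^sup>L (lebesgue_on (\<Omega> \<times> UNIV)) (\<lambda>z. F_eps \<epsilon> u z * dx b \<phi> z)
       + integral\<^sup>L (lebesgue_on (\<Omega> \<times> UNIV)) (\<lambda>z. F_eps \<epsilon> u z * dy b \<phi> z)
       = - integral\<^sup>L (lebesgue_on (\<Omega> \<times> UNIV)) (\<lambda>z. F_eps \<epsilon> (\<lambda>z. \<epsilon> * (g z \<bullet> b)) z * \<phi> z)"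
proof -
  let ?O = "\<Omega> \<times> (UNIV::'a set)"
  let ?L = "lebesgue_on ?O"
  define c where "c = inverse \<epsilon>"
  have s: "smooth_fun \<phi>" using \<phi> by (simp add: test_fun_def)
  have Osets: "?O \<in> sets lebesgue"
    by (rule borel_sets_lebesgue[OF times_sets]) (auto intro: borel_open \<Omega>)
  have d1m: "dx b \<phi> \<in> borel_measurable ?L" unfolding dx_def
    by (rule borel_lebesgue_on[OF borel_measurable_continuous_onI[OF smooth_deriv_cont[OF s]]])
  have d2m: "dy b \<phi> \<in> borel_measurable ?L" unfolding dy_def
    by (rule borel_lebesgue_on[OF borel_measurable_continuous_onI[OF smooth_deriv_cont[OF s]]])
  have pm: "\<phi> \<in> borel_measurable ?L"
    by (rule borel_lebesgue_on[OF borel_measurable_continuous_onI[OF smooth_funD(2)[OF s]]])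
  have Fum: "F_eps \<epsilon> u \<in> borel_measurable ?L" using Fu by (simp add: L2_per_def)
  have Fgm: "F_eps \<epsilon> (\<lambda>z. \<epsilon> * (g z \<bullet> b)) \<in> borel_measurable ?L" using Fg by (simp add: L2_per_def)
  have sh: "shear c = (\<lambda>z. (fst z, snd z + c *\<^sub>R fst z))" by (rule ext) (simp add: shear_def)
  have Tp: "distr lborel borel (shear c) = lborel" unfolding sh by (rule shear_preserving)
  have Tm: "shear c \<in> borel \<rightarrow>\<^sub>M borel" unfolding sh by (rule shear_meas)
  have TO: "shear c z \<in> ?O \<longleftrightarrow> z \<in> ?O" for z by (simp add: shear_def mem_Times_iff)
  have FT: "F_eps \<epsilon> u (shear c z) = u z" for z by (simp add: F_eps_def shear_def c_def)
  have FgT: "F_eps \<epsilon> (\<lambda>z. \<epsilon> * (g z \<bullet> b)) (shear c z) = \<epsilon> * (g z \<bullet> b)" for z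
    by (simp add: F_eps_def shear_def c_def)
  note cv = cv_restrict[OF Tm Tp Osets TO]
  have G1m: "(\<lambda>z. F_eps \<epsilon> u z * dx b \<phi> z) \<in> borel_measurable ?L" by (intro borel_measurable_times Fum d1m)
  have G2m: "(\<lambda>z. F_eps \<epsilon> u z * dy b \<phi> z) \<in> borel_measurable ?L" by (intro borel_measurable_times Fum d2m)
  have G3m: "(\<lambda>z. F_eps \<epsilon> (\<lambda>z. \<epsilon> * (g z \<bullet> b)) z * \<phi> z) \<in> borel_measurable ?L"
    by (intro borel_measurable_times Fgm pm)
  have int1: "integrable ?L (\<lambda>z. u z * dx b \<phi> (shear c z))" using cv(1)[OF G1m] i1 by (simp add: FT)
  have int2: "integrable ?L (\<lambda>z. u z * dy b \<phi> (shear c z))" using cv(1)[OF G2m] i2 by (simp add: FT)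
  have e1: "integral\<^sup>L ?L (\<lambda>z. F_eps \<epsilon> u z * dx b \<phi> z) = integral\<^sup>L ?L (\<lambda>z. u z * dx b \<phi> (shear c z))"
    using cv(2)[OF G1m] by (simp add: FT)
  have e2: "integral\<^sup>L ?L (\<lambda>z. F_eps \<epsilon> u z * dy b \<phi> z) = integral\<^sup>L ?L (\<lambda>z. u z * dy b \<phi> (shear c z))"
    using cv(2)[OF G2m] by (simp add: FT)
  have e3: "integral\<^sup>L ?L (\<lambda>z. F_eps \<epsilon> (\<lambda>z. \<epsilon> * (g z \<bullet> b)) z * \<phi> z)
      = \<epsilon> * integral\<^sup>L ?L (\<lambda>z. (g z \<bullet> b) * \<phi> (shear c z))"
    using cv(2)[OF G3m] by (simp add: FgT mult.assoc)
  have \<psi>: "(\<lambda>z. \<phi> (shear c z)) \<in> test_fun \<Omega>" by (rule test_fun_shear[OF \<phi>])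
  have gr: "integral\<^sup>L ?L (\<lambda>z. u z * dx b (\<lambda>z. \<phi> (shear c z)) z)
      = - integral\<^sup>L ?L (\<lambda>z. (g z \<bullet> b) * \<phi> (shear c z))"
    using grad \<psi> b unfolding is_grad_x_def by blast
  have "integral\<^sup>L ?L (\<lambda>z. u z * dx b (\<lambda>z. \<phi> (shear c z)) z)
      = integral\<^sup>L ?L (\<lambda>z. u z * dx b \<phi> (shear c z) + c * (u z * dy b \<phi> (shear c z)))"
    by (rule Bochner_Integration.integral_cong[OF refl]) (simp add: dx_shear[OF s b] algebra_simps)
  also have "\<dots> = integral\<^sup>L ?L (\<lambda>z. u z * dx b \<phi> (shear c z)) + c * integral\<^sup>L ?L (\<lambda>z. u z * dy b \<phi> (shear c z))"
    using int1 int2 by simp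
  finally have main: "integral\<^sup>L ?L (\<lambda>z. u z * dx b \<phi> (shear c z)) + c * integral\<^sup>L ?L (\<lambda>z. u z * dy b \<phi> (shear c z))
      = - integral\<^sup>L ?L (\<lambda>z. (g z \<bullet> b) * \<phi> (shear c z))" using gr by simp
  have ec: "\<epsilon> * c = 1" using \<epsilon> by (simp add: c_def)
  show ?thesis unfolding e1 e2 e3
  proof -
    let ?B = "integral\<^sup>L ?L (\<lambda>z. u z * dx b \<phi> (shear c z))"
    let ?A = "integral\<^sup>L ?L (\<lambda>z. u z * dy b \<phi> (shear c z))"
    let ?I = "integral\<^sup>L ?L (\<lambda>z. (g z \<bullet> b) * \<phi> (shear c z))"
    have "\<epsilon> * ?B + ?A = \<epsilon> * (?B + c * ?A)" using ec by (simp add: algebra_simps)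
    also have "\<dots> = - (\<epsilon> * ?I)" using main by simp
    finally show "\<epsilon> * ?B + ?A = - (\<epsilon> * ?I)" .
  qed
qed



theorem mainTheorem4:
  fixes \<Omega> :: "'a::euclidean_space set"
    and e :: "nat \<Rightarrow> real"
    and u :: "nat \<Rightarrow> 'a \<times> 'a \<Rightarrow> real"
    and gu :: "nat \<Rightarrow> 'a \<times> 'a \<Rightarrow> 'a"
    and u0 :: "'a \<times> 'a \<Rightarrow> real"
    and v :: "'a \<times> 'a \<Rightarrow> 'a"
  assumes "open \<Omega>"
    and "\<And>n. e n > 0" and "e \<longlonglongrightarrow> 0"
    and "\<And>n. u n \<in> H1_per \<Omega>"
    and "\<And>n. (\<forall>b\<in>Basis. (\<lambda>z. gu n z \<bullet> b) \<in> L2_per \<Omega>) \<and> is_grad_x \<Omega> (u n) (gu n)"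
    and "L2_per_weak_conv \<Omega> (\<lambda>n. F_eps (e n) (u n)) u0"
    and "\<And>b. b \<in> Basis \<Longrightarrow>
           L2_per_weak_conv \<Omega> (\<lambda>n. F_eps (e n) (\<lambda>z. e n * (gu n z \<bullet> b))) (\<lambda>z. v z \<bullet> b)"
  shows "is_grad_y \<Omega> u0 v"
  unfolding is_grad_y_def
proof (intro ballI)
  note \<Omega> = assms(1) and epos = assms(2) and e0 = assms(3)
  fix \<phi> :: "'a\<times>'a \<Rightarrow> real" and b :: 'a assume \<phi>: "\<phi> \<in> test_fun \<Omega>" and b: "b \<in> Basis"
  let ?L = "lebesgue_on (\<Omega> \<times> (UNIV::'a set))"
  have s: "smooth_fun \<phi>" and cs: "compact (tsupp \<phi>)" using \<phi> by (auto simp: test_fun_def)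
  obtain w1 where w1: "w1 \<in> L2_per \<Omega>" and W1: "\<And>f. f \<in> L2_per \<Omega> \<Longrightarrow>
      integrable ?L (\<lambda>z. f z * dx b \<phi> z) \<and> integral\<^sup>L ?L (\<lambda>z. f z * dx b \<phi> z) = L2_per_inner \<Omega> f w1"
    using UNF[OF \<Omega> smooth_deriv_cont[OF s] compact_tsupp_deriv[OF cs], of "(b, 0)"]
    unfolding dx_def by blast
  obtain w2 where w2: "w2 \<in> L2_per \<Omega>" and W2: "\<And>f. f \<in> L2_per \<Omega> \<Longrightarrow>
      integrable ?L (\<lambda>z. f z * dy b \<phi> z) \<and> integral\<^sup>L ?L (\<lambda>z. f z * dy b \<phi> z) = L2_per_inner \<Omega> f w2"
    using UNF[OF \<Omega> smooth_deriv_cont[OF s] compact_tsupp_deriv[OF cs], of "(0, b)"]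
    unfolding dy_def by blast
  obtain w3 where w3: "w3 \<in> L2_per \<Omega>" and W3: "\<And>f. f \<in> L2_per \<Omega> \<Longrightarrow>
      integrable ?L (\<lambda>z. f z * \<phi> z) \<and> integral\<^sup>L ?L (\<lambda>z. f z * \<phi> z) = L2_per_inner \<Omega> f w3"
    using UNF[OF \<Omega> smooth_funD(2)[OF s] cs] by blast
  have Fu: "\<And>n. F_eps (e n) (u n) \<in> L2_per \<Omega>" and u0: "u0 \<in> L2_per \<Omega>"
    and cu: "\<And>w. w \<in> L2_per \<Omega> \<Longrightarrow> (\<lambda>n. L2_per_inner \<Omega> (F_eps (e n) (u n)) w) \<longlonglongrightarrow> L2_per_inner \<Omega> u0 w"
    using assms(6) unfolding L2_per_weak_conv_def by auto
  have Fg: "\<And>n. F_eps (e n) (\<lambda>z. e n * (gu n z \<bullet> b)) \<in> L2_per \<Omega>" and vb: "(\<lambda>z. v z \<bullet> b) \<in> L2_per \<Omega>"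
    and cg: "\<And>w. w \<in> L2_per \<Omega> \<Longrightarrow> (\<lambda>n. L2_per_inner \<Omega> (F_eps (e n) (\<lambda>z. e n * (gu n z \<bullet> b))) w)
         \<longlonglongrightarrow> L2_per_inner \<Omega> (\<lambda>z. v z \<bullet> b) w"
    using assms(7)[OF b] unfolding L2_per_weak_conv_def by auto
  define A where "A n = L2_per_inner \<Omega> (F_eps (e n) (u n)) w2" for n
  define B where "B n = L2_per_inner \<Omega> (F_eps (e n) (u n)) w1" for n
  define C where "C n = L2_per_inner \<Omega> (F_eps (e n) (\<lambda>z. e n * (gu n z \<bullet> b))) w3" for n
  have key: "e n * B n + A n = - C n" for n
  proof -
    have grad: "is_grad_x \<Omega> (u n) (gu n)" using assms(5)[of n] by blast
    have "e n * integral\<^sup>L ?L (\<lambda>z. F_eps (e n) (u n) z * dx b \<phi> z)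
       + integral\<^sup>L ?L (\<lambda>z. F_eps (e n) (u n) z * dy b \<phi> z)
       = - integral\<^sup>L ?L (\<lambda>z. F_eps (e n) (\<lambda>z. e n * (gu n z \<bullet> b)) z * \<phi> z)"
      by (rule key_n[OF \<Omega> \<phi> b epos Fu Fg grad]) (use W1[OF Fu] W2[OF Fu] in auto)
    then show ?thesis unfolding A_def B_def C_def using W1[OF Fu] W2[OF Fu] W3[OF Fg] by simp
  qed
  have lA: "A \<longlonglongrightarrow> L2_per_inner \<Omega> u0 w2" unfolding A_def by (rule cu[OF w2])
  have lB: "B \<longlonglongrightarrow> L2_per_inner \<Omega> u0 w1" unfolding B_def by (rule cu[OF w1])
  have lC: "C \<longlonglongrightarrow> L2_per_inner \<Omega> (\<lambda>z. v z \<bullet> b) w3" unfolding C_def by (rule cg[OF w3])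
  have "(\<lambda>n. - C n - e n * B n) \<longlonglongrightarrow> - L2_per_inner \<Omega> (\<lambda>z. v z \<bullet> b) w3 - 0 * L2_per_inner \<Omega> u0 w1"
    by (intro tendsto_intros lC lB e0)
  moreover have "(\<lambda>n. - C n - e n * B n) = A"
  proof (rule ext)
    fix n show "- C n - e n * B n = A n" using key[of n] by linarith
  qed
  ultimately have "A \<longlonglongrightarrow> - L2_per_inner \<Omega> (\<lambda>z. v z \<bullet> b) w3" by simp
  then have eq: "L2_per_inner \<Omega> u0 w2 = - L2_per_inner \<Omega> (\<lambda>z. v z \<bullet> b) w3"
    using lA LIMSEQ_unique by blast
  show "integral\<^sup>L ?L (\<lambda>z. u0 z * dy b \<phi> z) = - integral\<^sup>L ?L (\<lambda>z. (v z \<bullet> b) * \<phi> z)"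
    using W2[OF u0] W3[OF vb] eq by simp
qed


end
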